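(* Let $Y$ be an indeterminate adjunction space with core space $X$, attachment spaces $\{A_j\}_{j\in\mathbb{N}}$ and attachment points $\{x_j\}_{j\in\mathbb{N}}$. If $Z\subseteq Y$ is a subspace that is a Peano continuum and meets $X$ and each set $A_j\setminus\{x_j\}$, then $Z$ is homeomorphic to the shrinking adjunction space $\operatorname{\bf Adj}(Z\cap X,x_j,Z\cap A_j,x_j)$ obtained by attaching the spaces $\{Z\cap A_j\}_{j\in\mathbb{N}}$ to $Z\cap X$ along the points $\{x_j\}_{j\in\mathbb{N}}$.
   Context: All spaces Hausdorff; Peano continuum = connected, locally path-connected compact metric space. $Y$ is an indeterminate adjunction space with core $X$, attachment spaces $\{A_j\}_{j\in J}$ and attachment points $\{x_j\}_{j\in J}$ if $X$ is a closed subspace of $Y$ and $Y\setminus X$ is the disjoint union of open sets $N_j$ ($j\in J$) with $A_j=\overline{N_j}$ and $A_j\cap X=\{x_j\}$ for all $j$. The shrinking adjunction space $\operatorname{\bf Adj}(X',x_j,A'_j,x_j)$ is $\varprojlim_k Y_k\subseteq\prod_k Y_k$ where $Y_k$ is the adjunction space from $X'\sqcup A'_1\sqcup\dots\sqcup A'_k$ identifying the basepoint $x_j\in A'_j$ with $x_j\in X'$, and $Y_{k+1}\to Y_k$ collapses $A'_{k+1}$ to $x_{k+1}$. *)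

theory Defs
  imports "HOL-Analysis.Analysis"
begin

definition quotient_topology :: "'a topology \<Rightarrow> ('a \<Rightarrow> 'b) \<Rightarrow> 'b topology" where
  "quotient_topology T f =
     topology (\<lambda>U. U \<subseteq> f ` topspace T \<and> openin T {p \<in> topspace T. f p \<in> U})"

lemma istopology_quotient:
  "istopology (\<lambda>U. U \<subseteq> f ` topspace T \<and> openin T {p \<in> topspace T. f p \<in> U})"
  unfolding istopology_def
proof (rule conjI; intro allI impI)
  fix S U
  assume a: "S \<subseteq> f ` topspace T \<and> openin T {p \<in> topspace T. f p \<in> S}"
     and b: "U \<subseteq> f ` topspace T \<and> openin T {p \<in> topspace T. f p \<in> U}"
  have e: "{p \<in> topspace T. f p \<in> S \<inter> U} =
      {p \<in> topspace T. f p \<in> S} \<inter> {p \<in> topspace T. f p \<in> U}" by blast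
  show "S \<inter> U \<subseteq> f ` topspace T \<and> openin T {p \<in> topspace T. f p \<in> S \<inter> U}"
    using a b unfolding e by auto
next
  fix K
  assume K: "\<forall>S\<in>K. S \<subseteq> f ` topspace T \<and> openin T {p \<in> topspace T. f p \<in> S}"
  have e: "{p \<in> topspace T. f p \<in> \<Union>K} = (\<Union>S\<in>K. {p \<in> topspace T. f p \<in> S})" by blast
  show "\<Union>K \<subseteq> f ` topspace T \<and> openin T {p \<in> topspace T. f p \<in> \<Union>K}"
    using K unfolding e by auto
qed
lemma openin_quotient_topology:
  "openin (quotient_topology T f) U \<longleftrightarrow>
     U \<subseteq> f ` topspace T \<and> openin T {p \<in> topspace T. f p \<in> U}"
  unfolding quotient_topology_def by (simp only: topology_inverse'[OF istopology_quotient])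

definition peano_continuum :: "'a topology \<Rightarrow> bool" where
  "peano_continuum T \<longleftrightarrow> topspace T \<noteq> {} \<and> compact_space T \<and> connected_space T \<and>
      locally_path_connected_space T \<and> metrizable_space T"

definition indeterminate_adjunction ::
  "'a topology \<Rightarrow> 'a set \<Rightarrow> (nat \<Rightarrow> 'a set) \<Rightarrow> (nat \<Rightarrow> 'a) \<Rightarrow> bool" where
  "indeterminate_adjunction Y X A x \<longleftrightarrow>
     closedin Y X \<and>
     (\<exists>N :: nat \<Rightarrow> 'a set.
        (\<forall>j. openin Y (N j)) \<and>
        (\<forall>i j. i \<noteq> j \<longrightarrow> N i \<inter> N j = {}) \<and>
        (\<Union>j. N j) = topspace Y - X \<and>
        (\<forall>j. A j = Y closure_of (N j)) \<and>
        (\<forall>j. A j \<inter> X = {x j}))"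

text \<open>Finite stage k: the disjoint union of the core X' (tag None) and A'_j for
  j < k (tag Some j), with the basepoint x j of A'_j identified with x j of X'.\<close>

definition adj_pieces :: "'a topology \<Rightarrow> (nat \<Rightarrow> 'a topology) \<Rightarrow> nat option \<Rightarrow> 'a topology" where
  "adj_pieces X' A' i = (case i of None \<Rightarrow> X' | Some j \<Rightarrow> A' j)"

definition adj_sum :: "'a topology \<Rightarrow> (nat \<Rightarrow> 'a topology) \<Rightarrow> nat \<Rightarrow> (nat option \<times> 'a) topology" where
  "adj_sum X' A' k = sum_topology (adj_pieces X' A') (insert None (Some ` {..<k}))"

text \<open>The glued point in the core represented by a point of the disjoint union, if any.\<close>
definition adj_gp :: "(nat \<Rightarrow> 'a) \<Rightarrow> nat option \<times> 'a \<Rightarrow> 'a option" where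
  "adj_gp x r = (case fst r of None \<Rightarrow> Some (snd r)
                  | Some j \<Rightarrow> (if snd r = x j then Some (snd r) else None))"

definition adj_rel :: "(nat \<Rightarrow> 'a) \<Rightarrow> nat option \<times> 'a \<Rightarrow> nat option \<times> 'a \<Rightarrow> bool" where
  "adj_rel x r s \<longleftrightarrow> r = s \<or> (adj_gp x r = adj_gp x s \<and> adj_gp x r \<noteq> None)"

definition adj_class ::
  "'a topology \<Rightarrow> (nat \<Rightarrow> 'a) \<Rightarrow> (nat \<Rightarrow> 'a topology) \<Rightarrow> nat \<Rightarrow> nat option \<times> 'a \<Rightarrow> (nat option \<times> 'a) set" where
  "adj_class X' x A' k r = {s \<in> topspace (adj_sum X' A' k). adj_rel x r s}"

definition adj_stage ::
  "'a topology \<Rightarrow> (nat \<Rightarrow> 'a) \<Rightarrow> (nat \<Rightarrow> 'a topology) \<Rightarrow> nat \<Rightarrow> (nat option \<times> 'a) set topology" where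
  "adj_stage X' x A' k = quotient_topology (adj_sum X' A' k) (adj_class X' x A' k)"

text \<open>Bonding map Y_(k+1) \<rightarrow> Y_k collapsing A'_k to x k.\<close>
definition adj_collapse :: "(nat \<Rightarrow> 'a) \<Rightarrow> nat \<Rightarrow> nat option \<times> 'a \<Rightarrow> nat option \<times> 'a" where
  "adj_collapse x k r = (if fst r = Some k then (None, x k) else r)"

definition adj_bond ::
  "'a topology \<Rightarrow> (nat \<Rightarrow> 'a) \<Rightarrow> (nat \<Rightarrow> 'a topology) \<Rightarrow> nat \<Rightarrow>
     (nat option \<times> 'a) set \<Rightarrow> (nat option \<times> 'a) set" where
  "adj_bond X' x A' k c = (\<Union>r\<in>c. adj_class X' x A' k (adj_collapse x k r))"

text \<open>Shrinking adjunction space Adj(X', x_j, A'_j, x_j) as the inverse limit of the Y_k,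
  a subspace of the product of all Y_k.\<close>
definition shrinking_adjunction ::
  "'a topology \<Rightarrow> (nat \<Rightarrow> 'a) \<Rightarrow> (nat \<Rightarrow> 'a topology) \<Rightarrow> (nat \<Rightarrow> (nat option \<times> 'a) set) topology" where
  "shrinking_adjunction X' x A' =
     subtopology (product_topology (adj_stage X' x A') UNIV)
       {y. (\<forall>k. y k \<in> topspace (adj_stage X' x A' k)) \<and>
           (\<forall>k. adj_bond X' x A' k (y (Suc k)) = y k)}"

end

theory Submission imports Defs begin

lemma topspace_quotient_topology:
  "topspace (quotient_topology T f) = f ` topspace T"
proof -
  have "openin (quotient_topology T f) (f ` topspace T)"
    unfolding openin_quotient_topology
  proof
    have "{p \<in> topspace T. f p \<in> f ` topspace T} = topspace T" by auto
    thus "openin T {p \<in> topspace T. f p \<in> f ` topspace T}" by simp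
  qed simp
  hence "f ` topspace T \<subseteq> topspace (quotient_topology T f)" by (rule openin_subset)
  moreover have "topspace (quotient_topology T f) \<subseteq> f ` topspace T"
    using openin_quotient_topology[of T f "topspace (quotient_topology T f)"] by auto
  ultimately show ?thesis by blast
qed

lemma continuous_map_quotient:
  "continuous_map T (quotient_topology T f) f"
  unfolding continuous_map_def topspace_quotient_topology
proof (intro conjI allI impI)
  show "f \<in> topspace T \<rightarrow> f ` topspace T" by auto
  fix U assume "openin (quotient_topology T f) U"
  thus "openin T {x \<in> topspace T. f x \<in> U}" unfolding openin_quotient_topology by auto
qed

lemma continuous_map_from_quotient:
  assumes "continuous_map T W (g \<circ> f)"
  shows "continuous_map (quotient_topology T f) W g"
  unfolding continuous_map_def topspace_quotient_topology
proof (intro conjI allI impI)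
  show "g \<in> f ` topspace T \<rightarrow> topspace W" using assms by (auto simp: continuous_map_def)
  fix U assume U: "openin W U"
  have e: "{p \<in> topspace T. f p \<in> {y \<in> f ` topspace T. g y \<in> U}} = {p \<in> topspace T. (g \<circ> f) p \<in> U}"
    by auto
  show "openin (quotient_topology T f) {y \<in> f ` topspace T. g y \<in> U}"
    unfolding openin_quotient_topology e using assms U by (auto simp: continuous_map_def)
qed

locale adjset =
  fixes Y :: "'a topology" and X :: "'a set" and A :: "nat \<Rightarrow> 'a set"
    and x :: "nat \<Rightarrow> 'a" and Z :: "'a set" and N :: "nat \<Rightarrow> 'a set"
  assumes Haus: "Hausdorff_space Y"
    and closedX: "closedin Y X"
    and Nopen: "\<And>j. openin Y (N j)"
    and Ndisj: "\<And>i j. i \<noteq> j \<Longrightarrow> N i \<inter> N j = {}"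
    and Nun: "(\<Union>j. N j) = topspace Y - X"
    and Aeq: "\<And>j. A j = Y closure_of (N j)"
    and AX: "\<And>j. A j \<inter> X = {x j}"
    and Zsub: "Z \<subseteq> topspace Y"
    and peano: "peano_continuum (subtopology Y Z)"
    and ZX: "Z \<inter> X \<noteq> {}"
    and ZA: "\<And>j. Z \<inter> (A j - {x j}) \<noteq> {}"
begin

lemma NX: "N j \<inter> X = {}" using Nun by blast
lemma NY: "N j \<subseteq> topspace Y" using Nun by blast
lemma xX: "x j \<in> X" using AX by blast
lemma xA: "x j \<in> A j" using AX by blast
lemma NA: "N j \<subseteq> A j" unfolding Aeq by (rule closure_of_subset[OF NY])
lemma AN: "A j \<subseteq> N j \<union> {x j}"
proof
  fix a assume a: "a \<in> A j"
  show "a \<in> N j \<union> {x j}"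
  proof (cases "a \<in> X")
    case True thus ?thesis using a AX by blast
  next
    case False
    have aY: "a \<in> topspace Y" using a closure_of_subset_topspace[of Y "N j"] unfolding Aeq by blast
    then obtain i where i: "a \<in> N i" using Nun False by blast
    show ?thesis
    proof (cases "i = j")
      case True thus ?thesis using i by blast
    next
      case False
      have "N i \<inter> N j = {}" using Ndisj False by blast
      hence "N i \<inter> Y closure_of N j = {}"
        by (simp add: openin_Int_closure_of_eq_empty[OF Nopen[of i]])
      hence "a \<notin> Y closure_of N j" using i by blast
      thus ?thesis using a unfolding Aeq by blast
    qed
  qed
qed
lemma A_eq: "A j = N j \<union> {x j}" using AN NA xA by blast
lemma xN: "x i \<notin> N j" using xX NX by blast
lemma NAdisj: "i \<noteq> j \<Longrightarrow> N i \<inter> A j = {}" using A_eq Ndisj xN by blast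
lemma AY: "A j \<subseteq> topspace Y" unfolding Aeq by (rule closure_of_subset_topspace)
lemma Aclosed: "closedin Y (A j)" using Aeq by simp

lemma conn_x:
  assumes C: "connectedin Y C" and "C \<inter> N i \<noteq> {}" and "\<not> C \<subseteq> N i"
  shows "x i \<in> C"
proof (rule ccontr)
  assume nx: "x i \<notin> C"
  have o2: "openin Y (topspace Y - A i)" using Aclosed by blast
  have "C \<subseteq> topspace Y" using C connectedin_subset_topspace by blast
  hence "C \<subseteq> N i \<union> (topspace Y - A i)" using nx A_eq by blast
  moreover have "N i \<inter> (topspace Y - A i) \<inter> C = {}" using NA by blast
  moreover have "(topspace Y - A i) \<inter> C \<noteq> {}" using assms(3) nx A_eq \<open>C \<subseteq> topspace Y\<close> by blast
  moreover have contra: "\<And>E1 E2. openin Y E1 \<Longrightarrow> openin Y E2 \<Longrightarrow> C \<subseteq> E1 \<union> E2 \<Longrightarrow>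
     E1 \<inter> E2 \<inter> C = {} \<Longrightarrow> E1 \<inter> C \<noteq> {} \<Longrightarrow> E2 \<inter> C \<noteq> {} \<Longrightarrow> False"
    using C unfolding connectedin by blast
  moreover have "N i \<inter> C \<noteq> {}" using assms(2) by blast
  ultimately show False using Nopen[of i] o2 by metis
qed

lemma Zconn: "connectedin Y Z"
  using peano Zsub unfolding peano_continuum_def connectedin_def by auto

lemma xZ: "x j \<in> Z"
proof -
  have "Z \<inter> N j \<noteq> {}" using ZA[of j] A_eq by blast
  moreover have "\<not> Z \<subseteq> N j" using ZX NX by blast
  ultimately show ?thesis using conn_x Zconn by blast
qed


lemma AXpt: "a \<in> A j \<Longrightarrow> a \<in> X \<Longrightarrow> a = x j" using AX by blast
lemma AA: "a \<in> A i \<Longrightarrow> a \<in> A j \<Longrightarrow> i \<noteq> j \<Longrightarrow> a = x i \<and> a = x j"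
  using A_eq[of i] A_eq[of j] Ndisj[of i j] xN[of i j] xN[of j i] by blast
lemma NN: "z \<in> N i \<Longrightarrow> z \<in> N j \<Longrightarrow> i = j" using Ndisj by blast

abbreviation "X' \<equiv> subtopology Y (Z \<inter> X)"
abbreviation "A' \<equiv> (\<lambda>j. subtopology Y (Z \<inter> A j))"
abbreviation "sp k \<equiv> topspace (adj_sum X' A' k)"

lemma sp_iff: "r \<in> sp k \<longleftrightarrow> (fst r = None \<and> snd r \<in> Z \<inter> X) \<or> (\<exists>j<k. fst r = Some j \<and> snd r \<in> Z \<inter> A j)"
proof -
  obtain i a where r: "r = (i, a)" by fastforce
  show ?thesis unfolding r adj_sum_def topspace_sum_topology
    using Zsub by (cases i) (auto simp: adj_pieces_def)
qed

lemma rel_iff: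
  assumes "r \<in> sp k" "s \<in> sp k"
  shows "adj_rel x r s \<longleftrightarrow> snd r = snd s"
proof -
  obtain i a where r: "r = (i, a)" by fastforce
  obtain i' b where s: "s = (i', b)" by fastforce
  show ?thesis
  proof
    assume "adj_rel x r s" thus "snd r = snd s"
      unfolding adj_rel_def adj_gp_def r s by (auto split: option.splits if_splits)
  next
    assume e: "snd r = snd s"
    show "adj_rel x r s"
    proof (cases i)
      case None
      show ?thesis
      proof (cases i')
        case None thus ?thesis using \<open>i = None\<close> e r s by (simp add: adj_rel_def)
      next
        case (Some j)
        have "b \<in> A j" "a \<in> X" using assms sp_iff r s None Some by auto
        hence "a = x j" using e r s AXpt by simp
        thus ?thesis using None Some e r s by (simp add: adj_rel_def adj_gp_def)
      qed
    next
      case (Some j)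
      show ?thesis
      proof (cases i')
        case None
        have "a \<in> A j" "b \<in> X" using assms sp_iff r s None Some by auto
        hence "a = x j" using e r s AXpt by simp
        thus ?thesis using None Some e r s by (simp add: adj_rel_def adj_gp_def)
      next
        case (Some j')
        have ab: "a \<in> A j" "b \<in> A j'" using assms sp_iff r s \<open>i = Some j\<close> Some by auto
        show ?thesis
        proof (cases "j = j'")
          case True thus ?thesis using \<open>i = Some j\<close> Some e r s by (simp add: adj_rel_def)
        next
          case False
          hence "a = x j \<and> a = x j'" using AA ab e r s by simp
          thus ?thesis using \<open>i = Some j\<close> Some e r s by (auto simp add: adj_rel_def adj_gp_def)
        qed
      qed
    qed
  qed
qed

definition P where "P k p = {s \<in> sp k. snd s = p}"

lemma class_eq: assumes "r \<in> sp k" shows "adj_class X' x A' k r = P k (snd r)"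
  unfolding adj_class_def P_def using rel_iff[OF assms] by auto

definition Zk where "Zk k = (Z \<inter> X) \<union> (\<Union>j\<in>{..<k}. Z \<inter> A j)"

lemma snd_sp: "snd ` sp k = Zk k"
proof
  show "snd ` sp k \<subseteq> Zk k" unfolding Zk_def using sp_iff by fastforce
  show "Zk k \<subseteq> snd ` sp k"
  proof
    fix p assume "p \<in> Zk k"
    then consider "p \<in> Z \<inter> X" | j where "j < k" "p \<in> Z \<inter> A j" unfolding Zk_def by auto
    thus "p \<in> snd ` sp k"
    proof cases
      case 1 hence "(None, p) \<in> sp k" using sp_iff by simp
      thus ?thesis by force
    next
      case 2 hence "(Some j, p) \<in> sp k" using sp_iff by simp
      thus ?thesis by force
    qed
  qed
qed

lemma P_ne: "p \<in> Zk k \<Longrightarrow> P k p \<noteq> {}"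
  using snd_sp unfolding P_def by force

lemma P_inj: "p \<in> Zk k \<Longrightarrow> P k p = P k q \<Longrightarrow> p = q"
  using P_ne unfolding P_def by force

lemma Zk_sub: "Zk k \<subseteq> Z" unfolding Zk_def by auto

lemma top_stage: "topspace (adj_stage X' x A' k) = P k ` Zk k"
proof -
  have "topspace (adj_stage X' x A' k) = adj_class X' x A' k ` sp k"
    unfolding adj_stage_def topspace_quotient_topology ..
  also have "\<dots> = (\<lambda>r. P k (snd r)) ` sp k" using class_eq by (auto simp: image_iff)
  also have "\<dots> = P k ` Zk k" unfolding snd_sp[symmetric] by (simp add: image_image)
  finally show ?thesis .
qed

definition idx where "idx z = (SOME j. z \<in> N j)"

lemma idx: "z \<in> N j \<Longrightarrow> idx z = j"
  unfolding idx_def by (metis NN someI)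

lemma inN: "z \<in> topspace Y \<Longrightarrow> z \<notin> X \<Longrightarrow> z \<in> N (idx z)"
  using Nun unfolding idx_def by (metis (no_types, lifting) DiffI UN_iff someI)

definition rho where "rho k z = (if z \<in> X then z else if idx z < k then z else x (idx z))"
definition sig where "sig k p = (if p \<in> N k then x k else p)"

lemma rho_Zk: assumes "z \<in> Z" shows "rho k z \<in> Zk k"
proof (cases "z \<in> X")
  case True thus ?thesis using assms unfolding rho_def Zk_def by auto
next
  case False
  hence "z \<in> N (idx z)" using inN Zsub assms by blast
  hence "z \<in> A (idx z)" using NA by blast
  thus ?thesis using assms False xZ xX unfolding rho_def Zk_def by auto
qed

lemma rho_sig: assumes "z \<in> Z" shows "sig k (rho (Suc k) z) = rho k z"
proof (cases "z \<in> X")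
  case True
  hence "z \<notin> N k" using NX by blast
  thus ?thesis using True unfolding rho_def sig_def by simp
next
  case False
  hence z: "z \<in> N (idx z)" using inN Zsub assms by blast
  consider "idx z < k" | "idx z = k" | "idx z > k" by linarith
  thus ?thesis
  proof cases
    case 1
    hence "z \<notin> N k" using idx[of z k] 1 by auto
    moreover have "idx z < Suc k" using 1 by simp
    ultimately show ?thesis using 1 False unfolding rho_def sig_def by simp
  next
    case 2 thus ?thesis using z False unfolding rho_def sig_def by simp
  next
    case 3
    hence "\<not> idx z < Suc k" "\<not> idx z < k" by simp_all
    moreover have "x (idx z) \<notin> N k" by (rule xN)
    ultimately show ?thesis using False unfolding rho_def sig_def by simp
  qed
qed

lemma rho_large: "k > idx z \<Longrightarrow> rho k z = z" unfolding rho_def by auto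

lemma collapse:
  assumes "r \<in> sp (Suc k)"
  shows "adj_collapse x k r \<in> sp k \<and> snd (adj_collapse x k r) = sig k (snd r)"
proof (cases "fst r = Some k")
  case True
  hence "snd r \<in> A k" using assms sp_iff[of r "Suc k"] by auto
  hence "snd r \<in> N k \<or> snd r = x k" using A_eq[of k] by blast
  hence "sig k (snd r) = x k" using xN[of k k] unfolding sig_def by auto
  moreover have "(None, x k) \<in> sp k" using sp_iff xZ xX by simp
  ultimately show ?thesis using True unfolding adj_collapse_def by simp
next
  case False
  have r: "(fst r = None \<and> snd r \<in> Z \<inter> X) \<or> (\<exists>j<k. fst r = Some j \<and> snd r \<in> Z \<inter> A j)"
  proof -
    have "(fst r = None \<and> snd r \<in> Z \<inter> X) \<or> (\<exists>j<Suc k. fst r = Some j \<and> snd r \<in> Z \<inter> A j)"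
      using assms sp_iff[of r "Suc k"] by blast
    thus ?thesis using False less_Suc_eq by blast
  qed
  have "snd r \<notin> N k"
  proof
    assume a: "snd r \<in> N k"
    from r show False
    proof
      assume "fst r = None \<and> snd r \<in> Z \<inter> X" thus False using a NX[of k] by blast
    next
      assume "\<exists>j<k. fst r = Some j \<and> snd r \<in> Z \<inter> A j"
      then obtain j where "j < k" "snd r \<in> A j" by blast
      thus False using a NAdisj[of k j] by auto
    qed
  qed
  hence "sig k (snd r) = snd r" unfolding sig_def by simp
  moreover have "r \<in> sp k" using r sp_iff[of r k] by blast
  ultimately show ?thesis using False unfolding adj_collapse_def by simp
qed

lemma bond: assumes "p \<in> Zk (Suc k)"
  shows "adj_bond X' x A' k (P (Suc k) p) = P k (sig k p)"
proof -
  have "\<And>r. r \<in> P (Suc k) p \<Longrightarrow> adj_class X' x A' k (adj_collapse x k r) = P k (sig k p)"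
    using collapse class_eq unfolding P_def by auto
  thus ?thesis unfolding adj_bond_def using P_ne[OF assms] by auto
qed


lemma topT: "topspace (subtopology Y Z) = Z" using Zsub by auto

lemma snd_cont: "continuous_map (adj_sum X' A' k) Y snd"
  unfolding continuous_map_def
proof (intro conjI allI impI)
  show "snd \<in> sp k \<rightarrow> topspace Y" using sp_iff Zsub by auto
  fix V assume V: "openin Y V"
  let ?Q = "{r \<in> sp k. snd r \<in> V}"
  have "\<And>i. i \<in> insert None (Some ` {..<k}) \<Longrightarrow> openin (adj_pieces X' A' i) {a. (i, a) \<in> ?Q}"
  proof -
    fix i assume i: "i \<in> insert None (Some ` {..<k})"
    show "openin (adj_pieces X' A' i) {a. (i, a) \<in> ?Q}"
    proof (cases i)
      case None
      have "{a. (i, a) \<in> ?Q} = V \<inter> (Z \<inter> X)" using None sp_iff by auto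
      thus ?thesis using None openin_subtopology_Int[OF V] by (simp add: adj_pieces_def)
    next
      case (Some j)
      have "j < k" using i Some by auto
      hence "{a. (i, a) \<in> ?Q} = V \<inter> (Z \<inter> A j)" using Some sp_iff by auto
      thus ?thesis using Some openin_subtopology_Int[OF V] by (simp add: adj_pieces_def)
    qed
  qed
  moreover have "?Q \<subseteq> Sigma (insert None (Some ` {..<k})) (topspace \<circ> adj_pieces X' A')"
    unfolding adj_sum_def by auto
  ultimately show "openin (adj_sum X' A' k) ?Q"
    unfolding adj_sum_def openin_sum_topology by blast
qed

definition hh where "hh c = snd (SOME r. r \<in> c)"

lemma hh_P: assumes "p \<in> Zk k" shows "hh (P k p) = p"
proof -
  have "\<exists>r. r \<in> P k p" using P_ne[OF assms] by blast
  hence "(SOME r. r \<in> P k p) \<in> P k p" by (rule someI_ex)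
  thus ?thesis unfolding hh_def P_def by simp
qed

lemma stage_haus: "Hausdorff_space (adj_stage X' x A' k)"
proof (rule Hausdorff_space_injective_preimage[OF Haus])
  have "continuous_map (adj_sum X' A' k) Y (hh \<circ> adj_class X' x A' k)"
  proof (rule continuous_map_eq[OF snd_cont])
    fix r assume r: "r \<in> sp k"
    have "snd r \<in> Zk k" using r snd_sp by blast
    thus "snd r = (hh \<circ> adj_class X' x A' k) r" using class_eq[OF r] hh_P by simp
  qed
  thus "continuous_map (adj_stage X' x A' k) Y hh"
    unfolding adj_stage_def by (rule continuous_map_from_quotient)
  show "inj_on hh (topspace (adj_stage X' x A' k))"
    unfolding top_stage inj_on_def using hh_P by auto
qed

abbreviation "SS \<equiv> shrinking_adjunction X' x A'"

lemma topSS: "topspace SS = {y. (\<forall>k. y k \<in> topspace (adj_stage X' x A' k)) \<and>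
           (\<forall>k. adj_bond X' x A' k (y (Suc k)) = y k)}"
  unfolding shrinking_adjunction_def by (auto simp: PiE_UNIV_domain)

lemma SS_haus: "Hausdorff_space SS"
  unfolding shrinking_adjunction_def
  by (rule Hausdorff_space_subtopology) (simp add: Hausdorff_space_product_topology stage_haus)

definition F where "F z = (\<lambda>k. P k (rho k z))"

lemma F_top: assumes "z \<in> Z" shows "F z \<in> topspace SS"
  unfolding topSS F_def using assms
  by (simp add: top_stage rho_Zk bond rho_sig)

lemma F_inj: "inj_on F Z"
proof
  fix z z' assume z: "z \<in> Z" and z': "z' \<in> Z" and e: "F z = F z'"
  define k where "k = Suc (max (idx z) (idx z'))"
  have r: "rho k z = z" "rho k z' = z'" using rho_large k_def by auto
  have "P k (rho k z) = P k (rho k z')" using e unfolding F_def by metis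
  thus "z = z'" using P_inj rho_Zk[OF z, of k] r by metis
qed


lemma F_onto: assumes y: "y \<in> topspace SS" shows "\<exists>z\<in>Z. F z = y"
proof -
  have yk: "\<And>k. y k \<in> P k ` Zk k" and yb: "\<And>k. adj_bond X' x A' k (y (Suc k)) = y k"
    using y unfolding topSS top_stage by auto
  define p where "p k = (SOME q. q \<in> Zk k \<and> y k = P k q)" for k
  have p: "p k \<in> Zk k \<and> y k = P k (p k)" for k
  proof -
    have "\<exists>q. q \<in> Zk k \<and> y k = P k q" using yk[of k] by blast
    thus ?thesis unfolding p_def by (rule someI_ex)
  qed
  have pZ: "p k \<in> Z" for k using p Zk_sub by blast
  have ps: "p k = sig k (p (Suc k))" for k
  proof -
    have "P k (p k) = adj_bond X' x A' k (P (Suc k) (p (Suc k)))" using p yb by metis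
    also have "\<dots> = P k (sig k (p (Suc k)))" using bond p by blast
    finally show ?thesis using P_inj p by blast
  qed
  have ex: "\<exists>z m. z \<in> Z \<and> (\<forall>K\<ge>m. p K = rho K z)"
  proof (cases "\<exists>m. p m \<notin> X")
    case True
    then obtain m where m: "p m \<notin> X" by blast
    define z where "z = p m"
    have "p m \<in> Zk m" using p by blast
    then obtain j where j: "j < m" "z \<in> A j" using m unfolding Zk_def z_def by auto
    have "z \<in> N j" using j A_eq[of j] xX m z_def by auto
    hence iz: "idx z = j" by (rule idx)
    have zX: "z \<notin> X" using m z_def by simp
    have up: "p (m + n) = z" for n
    proof (induction n)
      case 0 thus ?case using z_def by simp
    next
      case (Suc n)
      have e: "z = sig (m + n) (p (Suc (m + n)))" using ps[of "m + n"] Suc by simp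
      show ?case
      proof (cases "p (Suc (m + n)) \<in> N (m + n)")
        case True
        hence "z = x (m + n)" using e unfolding sig_def by simp
        thus ?thesis using zX xX by blast
      next
        case False thus ?thesis using e unfolding sig_def by simp
      qed
    qed
    have "\<forall>K\<ge>m. p K = rho K z"
    proof (intro allI impI)
      fix K assume "m \<le> K"
      then obtain n where "K = m + n" using le_Suc_ex by blast
      moreover have "rho K z = z" using rho_large iz j \<open>m \<le> K\<close> by simp
      ultimately show "p K = rho K z" using up by simp
    qed
    thus ?thesis using pZ z_def by blast
  next
    case False
    hence pX: "\<And>m. p m \<in> X" by blast
    have up: "p n = p 0" for n
    proof (induction n)
      case (Suc n)
      have "p (Suc n) \<notin> N n" using pX NX by blast
      hence "p n = p (Suc n)" using ps[of n] unfolding sig_def by simp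
      thus ?case using Suc by simp
    qed simp
    have "\<forall>K\<ge>0. p K = rho K (p 0)" using up pX unfolding rho_def by simp
    thus ?thesis using pZ by blast
  qed
  then obtain z m where z: "z \<in> Z" and hm: "\<And>K. K \<ge> m \<Longrightarrow> p K = rho K z" by blast
  have down: "\<forall>k. m \<le> k + n \<longrightarrow> p k = rho k z" for n
  proof (induction n)
    case 0 thus ?case using hm by simp
  next
    case (Suc n)
    show ?case
    proof (intro allI impI)
      fix k assume "m \<le> k + Suc n"
      hence "p (Suc k) = rho (Suc k) z" using Suc by simp
      thus "p k = rho k z" using ps[of k] rho_sig[OF z] by simp
    qed
  qed
  have "p k = rho k z" for k using down[of m] by simp
  hence "F z = y" unfolding F_def using p by (simp add: fun_eq_iff)
  thus ?thesis using z by blast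
qed


lemma loc_conn: "locally_connected_space (subtopology Y Z)"
  using peano unfolding peano_continuum_def
  by (simp add: locally_path_connected_imp_locally_connected_space)

lemma rho_cont:
  fixes k :: nat
  defines "W \<equiv> Z - (\<Union>j\<in>{..<k}. N j)"
  shows "continuous_map (subtopology Y W) X' (rho k)"
  unfolding continuous_map_def
proof (intro conjI allI impI)
  have WZ: "W \<subseteq> Z" unfolding W_def by blast
  have idxW: "w \<in> W \<Longrightarrow> w \<notin> X \<Longrightarrow> idx w \<ge> k \<and> w \<in> N (idx w) \<and> rho k w = x (idx w)" for w
  proof -
    assume w: "w \<in> W" "w \<notin> X"
    hence wN: "w \<in> N (idx w)" using inN WZ Zsub by blast
    have "\<not> idx w < k" using w wN unfolding W_def by blast
    thus ?thesis using wN w unfolding rho_def by simp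
  qed
  have rhoX: "w \<in> X \<Longrightarrow> rho k w = w" for w unfolding rho_def by simp
  show "rho k \<in> topspace (subtopology Y W) \<rightarrow> topspace X'"
  proof
    fix w assume "w \<in> topspace (subtopology Y W)"
    hence w: "w \<in> W" by simp
    show "rho k w \<in> topspace X'"
    proof (cases "w \<in> X")
      case True thus ?thesis using w WZ Zsub rhoX by auto
    next
      case False thus ?thesis using idxW[OF w False] xZ xX Zsub by auto
    qed
  qed
  fix U assume U: "openin X' U"
  then obtain V where V: "openin Y V" and UV: "U = V \<inter> (Z \<inter> X)" unfolding openin_subtopology by blast
  let ?Q = "{w \<in> topspace (subtopology Y W). rho k w \<in> U}"
  show "openin (subtopology Y W) ?Q"
    unfolding openin_subopen[of _ ?Q]
  proof
    fix w assume wQ: "w \<in> ?Q"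
    hence w: "w \<in> W" and wU: "rho k w \<in> U" by auto
    show "\<exists>G. openin (subtopology Y W) G \<and> w \<in> G \<and> G \<subseteq> ?Q"
    proof (cases "w \<in> X")
      case False
      define i where "i = idx w"
      have wi: "w \<in> N i" "rho k w = x i" using idxW[OF w False] i_def by auto
      have "openin (subtopology Y W) (N i \<inter> W)" using openin_subtopology_Int[OF Nopen] by blast
      moreover have "N i \<inter> W \<subseteq> ?Q"
      proof
        fix u assume u: "u \<in> N i \<inter> W"
        hence uX: "u \<notin> X" using NX by blast
        have "idx u = i" using u idx by blast
        hence "rho k u = x i" using idxW[of u] u uX by auto
        thus "u \<in> ?Q" using u wU wi Zsub WZ by auto
      qed
      ultimately show ?thesis using wi w by blast
    next
      case True
      have "w \<in> V \<inter> Z" using wU rhoX[OF True] UV by simp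
      moreover have "openin (subtopology Y Z) (V \<inter> Z)" using openin_subtopology_Int[OF V] by blast
      ultimately obtain U0 where U0: "openin (subtopology Y Z) U0" "connectedin (subtopology Y Z) U0"
        "w \<in> U0" "U0 \<subseteq> V \<inter> Z"
        using loc_conn unfolding locally_connected_space by meson
      obtain U1 where U1: "openin Y U1" "U0 = U1 \<inter> Z" using U0(1) unfolding openin_subtopology by blast
      have cU0: "connectedin Y U0" using U0(2) connectedin_subtopology by blast
      have "openin (subtopology Y W) (U1 \<inter> W)" using openin_subtopology_Int[OF U1(1)] by blast
      moreover have "w \<in> U1 \<inter> W" using U0 U1 w by blast
      moreover have "U1 \<inter> W \<subseteq> ?Q"
      proof
        fix u assume u: "u \<in> U1 \<inter> W"
        hence uU0: "u \<in> U0" using U1 WZ by blast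
        have "rho k u \<in> U"
        proof (cases "u \<in> X")
          case True thus ?thesis using rhoX uU0 U0(4) UV by auto
        next
          case False
          define i where "i = idx u"
          have ui: "u \<in> N i" "rho k u = x i" using idxW[of u] u False i_def by auto
          have "U0 \<inter> N i \<noteq> {}" using ui uU0 by blast
          moreover have "\<not> U0 \<subseteq> N i" using U0(3) True NX by blast
          ultimately have "x i \<in> U0" using conn_x cU0 by blast
          thus ?thesis using ui U0(4) UV xX by auto
        qed
        thus "u \<in> ?Q" using u Zsub WZ by auto
      qed
      ultimately show ?thesis by blast
    qed
  qed
qed


lemma rho_W: assumes "z \<in> Z - (\<Union>j\<in>{..<k}. N j)" shows "rho k z \<in> Z \<inter> X"
proof -
  have "rho k z \<in> topspace X'" using rho_cont[of k] assms Zsub unfolding continuous_map_def by auto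
  thus ?thesis by simp
qed

lemma coord_cont: "continuous_map (subtopology Y Z) (adj_stage X' x A' k) (\<lambda>z. P k (rho k z))"
proof -
  define I where "I = insert None (Some ` {..<k})"
  define Tp where "Tp i = (case i of None \<Rightarrow> Z - (\<Union>j\<in>{..<k}. N j) | Some j \<Rightarrow> Z \<inter> A j)" for i
  let ?g = "\<lambda>z. P k (rho k z)"
  let ?q = "adj_class X' x A' k"
  have sumeq: "sum_topology (adj_pieces X' A') I = adj_sum X' A' k" unfolding adj_sum_def I_def ..
  show ?thesis
  proof (rule pasting_lemma_closed[where I = I and T = Tp and f = "\<lambda>i. ?g"])
    show "finite I" unfolding I_def by simp
  next
    fix i assume i: "i \<in> I"
    show "closedin (subtopology Y Z) (Tp i)"
    proof (cases i)
      case None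
      have o: "openin Y (\<Union>j\<in>{..<k}. N j)" using Nopen by auto
      have "closedin Y (topspace Y - (\<Union>j\<in>{..<k}. N j))" using o by auto
      hence "closedin (subtopology Y Z) (Z \<inter> (topspace Y - (\<Union>j\<in>{..<k}. N j)))"
        by (rule closedin_subtopology_Int_closed)
      moreover have "Z \<inter> (topspace Y - (\<Union>j\<in>{..<k}. N j)) = Tp i" unfolding Tp_def None using Zsub by auto
      ultimately show ?thesis by simp
    next
      case (Some j)
      show ?thesis unfolding Tp_def Some using closedin_subtopology_Int_closed[OF Aclosed] by simp
    qed
    show "continuous_map (subtopology (subtopology Y Z) (Tp i)) (adj_stage X' x A' k) ?g"
    proof (cases i)
      case None
      let ?W = "Z - (\<Union>j\<in>{..<k}. N j)"
      have e: "subtopology (subtopology Y Z) (Tp i) = subtopology Y ?W"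
        unfolding subtopology_subtopology Tp_def None by (simp add: Int_absorb1 Diff_subset)
      have inj: "continuous_map X' (adj_sum X' A' k) (\<lambda>a. (None, a))"
        using continuous_map_component_injection[of None I "adj_pieces X' A'"] sumeq
        unfolding I_def by (simp add: adj_pieces_def)
      have c: "continuous_map (subtopology Y ?W) (adj_stage X' x A' k) (?q \<circ> (\<lambda>a. (None, a)) \<circ> rho k)"
        using continuous_map_compose[OF rho_cont continuous_map_compose[OF inj continuous_map_quotient[of "adj_sum X' A' k" ?q]]]
        unfolding adj_stage_def by (simp add: comp_assoc)
      show ?thesis unfolding e
      proof (rule continuous_map_eq[OF c])
        fix z assume "z \<in> topspace (subtopology Y ?W)"
        hence z: "z \<in> ?W" by simp
        have "(None, rho k z) \<in> sp k" using rho_W[OF z] sp_iff by simp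
        thus "(?q \<circ> (\<lambda>a. (None, a)) \<circ> rho k) z = ?g z" using class_eq by simp
      qed
    next
      case (Some j)
      have j: "j < k" using i Some unfolding I_def by auto
      have e: "subtopology (subtopology Y Z) (Tp i) = subtopology Y (Z \<inter> A j)"
        unfolding subtopology_subtopology Tp_def Some by (simp add: Int_assoc)
      have inj: "continuous_map (A' j) (adj_sum X' A' k) (\<lambda>a. (Some j, a))"
        using continuous_map_component_injection[of "Some j" I "adj_pieces X' A'"] sumeq j
        unfolding I_def by (simp add: adj_pieces_def)
      have c: "continuous_map (A' j) (adj_stage X' x A' k) (?q \<circ> (\<lambda>a. (Some j, a)))"
        using continuous_map_compose[OF inj continuous_map_quotient[of "adj_sum X' A' k" ?q]]
        unfolding adj_stage_def by simp
      show ?thesis unfolding e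
      proof (rule continuous_map_eq[OF c])
        fix z assume "z \<in> topspace (A' j)"
        hence z: "z \<in> Z" "z \<in> A j" by auto
        have "(Some j, z) \<in> sp k" using z j sp_iff by simp
        hence q: "?q (Some j, z) = P k z" using class_eq by simp
        have "rho k z = z"
        proof (cases "z \<in> X")
          case True thus ?thesis unfolding rho_def by simp
        next
          case False
          hence "z \<in> N j" using z A_eq[of j] xX by auto
          hence "idx z = j" by (rule idx)
          thus ?thesis using j unfolding rho_def by simp
        qed
        thus "(?q \<circ> (\<lambda>a. (Some j, a))) z = ?g z" using q by simp
      qed
    qed
  next
    fix i j z show "?g z = ?g z" ..
  next
    fix z assume "z \<in> topspace (subtopology Y Z)"
    hence z: "z \<in> Z" by simp
    show "\<exists>j. j \<in> I \<and> z \<in> Tp j \<and> ?g z = ?g z"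
    proof (cases "\<exists>j<k. z \<in> N j")
      case True
      then obtain j where "j < k" "z \<in> N j" by blast
      hence "Some j \<in> I" "z \<in> Tp (Some j)" using z NA unfolding I_def Tp_def by auto
      thus ?thesis by blast
    next
      case False
      hence "None \<in> I" "z \<in> Tp None" using z unfolding I_def Tp_def by auto
      thus ?thesis by blast
    qed
  qed
qed

lemma F_cont: "continuous_map (subtopology Y Z) SS F"
  unfolding shrinking_adjunction_def continuous_map_in_subtopology
proof
  show "continuous_map (subtopology Y Z) (product_topology (adj_stage X' x A') UNIV) F"
    unfolding continuous_map_componentwise_UNIV F_def using coord_cont by simp
  show "F \<in> topspace (subtopology Y Z) \<rightarrow> {y. (\<forall>k. y k \<in> topspace (adj_stage X' x A' k)) \<and>
           (\<forall>k. adj_bond X' x A' k (y (Suc k)) = y k)}"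
    using F_top unfolding topSS topT by blast
qed

lemma main: "subtopology Y Z homeomorphic_space SS"
proof (rule homeomorphic_map_imp_homeomorphic_space)
  show "homeomorphic_map (subtopology Y Z) SS F"
  proof (rule continuous_imp_homeomorphic_map[OF F_cont _ SS_haus])
    show "compact_space (subtopology Y Z)" using peano unfolding peano_continuum_def by simp
    show "F ` topspace (subtopology Y Z) = topspace SS"
      unfolding topT using F_top F_onto by blast
    show "inj_on F (topspace (subtopology Y Z))" unfolding topT by (rule F_inj)
  qed
qed

end

theorem proposition3p15:
  fixes Y :: "'a topology" and X :: "'a set" and A :: "nat \<Rightarrow> 'a set"
    and x :: "nat \<Rightarrow> 'a" and Z :: "'a set"
  assumes "Hausdorff_space Y"
    and "indeterminate_adjunction Y X A x"
    and "Z \<subseteq> topspace Y"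
    and "peano_continuum (subtopology Y Z)"
    and "Z \<inter> X \<noteq> {}"
    and "\<And>j. Z \<inter> (A j - {x j}) \<noteq> {}"
  shows "subtopology Y Z homeomorphic_space
           shrinking_adjunction (subtopology Y (Z \<inter> X)) x (\<lambda>j. subtopology Y (Z \<inter> A j))"
proof -
  obtain N where N: "closedin Y X" "\<forall>j. openin Y (N j)" "\<forall>i j. i \<noteq> j \<longrightarrow> N i \<inter> N j = {}"
    "(\<Union>j. N j) = topspace Y - X" "\<forall>j. A j = Y closure_of (N j)" "\<forall>j. A j \<inter> X = {x j}"
    using assms(2) unfolding indeterminate_adjunction_def by blast
  interpret adjset Y X A x Z N
    using assms N by unfold_locales auto
  show ?thesis by (rule main)
qed

end
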